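(* The 3-graph $J_4$ with vertex set $[5]$ and edges $123,124,125,134,135,145$ is forbidden for every triangle $T$.
   Context: A 3-graph is a 3-uniform hypergraph; $G$ is $F$-free if it has no (not necessarily induced) subhypergraph isomorphic to $F$. For a triangle $T$ with side lengths $a,b,c$ and $\varepsilon>0$, with $\varepsilon'=\varepsilon\min\{a,b,c\}$, a triangle $A'B'C'$ is $\varepsilon$-congruent to $T$ if there are $A,B,C\in\mathbb{R}^2$ with $ABC$ congruent to $T$ and $A',B',C'$ within distance $\varepsilon'$ of $A,B,C$ respectively. For finite $P\subseteq\mathbb{R}^2$, $\mathcal{H}(T,P,\varepsilon)$ is the 3-graph on $P$ whose edges are triples forming triangles $\varepsilon$-congruent to $T$. A 3-graph $H$ is forbidden for $T$ if there exists $\varepsilon>0$ such that for every $P\subseteq\mathbb{R}^2$ with $|P|=|V(H)|$, $\mathcal{H}(T,P,\varepsilon)$ is $H$-free. *)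

theory Defs
  imports "HOL-Analysis.Analysis"
begin

type_synonym 'a graph3 = "'a set \<times> 'a set set"

definition is_3graph :: "'a graph3 \<Rightarrow> bool" where
  "is_3graph G \<longleftrightarrow> (\<forall>e\<in>snd G. e \<subseteq> fst G \<and> card e = 3)"

definition contains_copy :: "'b graph3 \<Rightarrow> 'a graph3 \<Rightarrow> bool" where
  "contains_copy F G \<longleftrightarrow>
     (\<exists>f. inj_on f (fst F) \<and> f ` fst F \<subseteq> fst G \<and> (\<forall>e\<in>snd F. f ` e \<in> snd G))"

definition free_of :: "'b graph3 \<Rightarrow> 'a graph3 \<Rightarrow> bool" where
  "free_of F G \<longleftrightarrow> \<not> contains_copy F G"

definition is_triangle :: "real \<Rightarrow> real \<Rightarrow> real \<Rightarrow> bool" where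
  "is_triangle a b c \<longleftrightarrow> a > 0 \<and> b > 0 \<and> c > 0 \<and> a < b + c \<and> b < a + c \<and> c < a + b"

definition eps_congruent ::
  "real \<Rightarrow> real \<Rightarrow> real \<Rightarrow> real \<Rightarrow> real^2 \<Rightarrow> real^2 \<Rightarrow> real^2 \<Rightarrow> bool" where
  "eps_congruent a b c \<epsilon> A' B' C' \<longleftrightarrow>
     (\<exists>A B C :: real^2. dist B C = a \<and> dist C A = b \<and> dist A B = c \<and>
        dist A' A \<le> \<epsilon> * min a (min b c) \<and>
        dist B' B \<le> \<epsilon> * min a (min b c) \<and>
        dist C' C \<le> \<epsilon> * min a (min b c))"

definition congr_graph :: "real \<Rightarrow> real \<Rightarrow> real \<Rightarrow> (real^2) set \<Rightarrow> real \<Rightarrow> (real^2) graph3" where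
  "congr_graph a b c P \<epsilon> =
     (P, {e. e \<subseteq> P \<and> card e = 3 \<and>
            (\<exists>x y z. e = {x, y, z} \<and> eps_congruent a b c \<epsilon> x y z)})"

definition forbidden_for :: "'b graph3 \<Rightarrow> real \<Rightarrow> real \<Rightarrow> real \<Rightarrow> bool" where
  "forbidden_for H a b c \<longleftrightarrow>
     (\<exists>\<epsilon>>0. \<forall>P :: (real^2) set. finite P \<and> card P = card (fst H) \<longrightarrow>
         free_of H (congr_graph a b c P \<epsilon>))"

definition J4 :: "nat graph3" where
  "J4 = ({1..5}, {{1,2,3},{1,2,4},{1,2,5},{1,3,4},{1,3,5},{1,4,5}})"

end

theory Submission
  imports Defs
begin

definition GG :: "real \<Rightarrow> real \<Rightarrow> real \<Rightarrow> real \<Rightarrow> real \<Rightarrow> real \<Rightarrow> real" where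
  "GG d01 d02 d03 d12 d13 d23 =
    (let g11 = d01\<^sup>2; g22 = d02\<^sup>2; g33 = d03\<^sup>2;
         g12 = (d01\<^sup>2 + d02\<^sup>2 - d12\<^sup>2)/2; g13 = (d01\<^sup>2 + d03\<^sup>2 - d13\<^sup>2)/2;
         g23 = (d02\<^sup>2 + d03\<^sup>2 - d23\<^sup>2)/2
     in g11*g22*g33 + 2*g12*g13*g23 - g11*g23\<^sup>2 - g22*g13\<^sup>2 - g33*g12\<^sup>2)"

lemma dist2_vec: "(dist (p::real^2) q)\<^sup>2 = (p$1 - q$1)\<^sup>2 + (p$2 - q$2)\<^sup>2"
  by (simp add: dist_vec_def L2_set_def sum_2 dist_real_def)

lemma GG_planar:
  fixes p0 p1 p2 p3 :: "real^2"
  shows "GG (dist p0 p1) (dist p0 p2) (dist p0 p3) (dist p1 p2) (dist p1 p3) (dist p2 p3) = 0"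
proof -
  define u1 where "u1 = p1$1 - p0$1"
  define u2 where "u2 = p1$2 - p0$2"
  define v1 where "v1 = p2$1 - p0$1"
  define v2 where "v2 = p2$2 - p0$2"
  define w1 where "w1 = p3$1 - p0$1"
  define w2 where "w2 = p3$2 - p0$2"
  have e: "(dist p0 p1)\<^sup>2 = u1\<^sup>2 + u2\<^sup>2" "(dist p0 p2)\<^sup>2 = v1\<^sup>2 + v2\<^sup>2" "(dist p0 p3)\<^sup>2 = w1\<^sup>2 + w2\<^sup>2"
    "(dist p1 p2)\<^sup>2 = (u1-v1)\<^sup>2 + (u2-v2)\<^sup>2" "(dist p1 p3)\<^sup>2 = (u1-w1)\<^sup>2 + (u2-w2)\<^sup>2"
    "(dist p2 p3)\<^sup>2 = (v1-w1)\<^sup>2 + (v2-w2)\<^sup>2"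
    unfolding dist2_vec u1_def u2_def v1_def v2_def w1_def w2_def by algebra+
  have g: "((dist p0 p1)\<^sup>2 + (dist p0 p2)\<^sup>2 - (dist p1 p2)\<^sup>2)/2 = u1* v1+u2* v2"
     "((dist p0 p1)\<^sup>2 + (dist p0 p3)\<^sup>2 - (dist p1 p3)\<^sup>2)/2 = u1* w1+u2* w2"
     "((dist p0 p2)\<^sup>2 + (dist p0 p3)\<^sup>2 - (dist p2 p3)\<^sup>2)/2 = v1* w1+v2* w2"
    unfolding e by (simp_all add: power2_eq_square algebra_simps)
  show ?thesis unfolding GG_def Let_def g unfolding e(1-3) by algebra
qed

lemma GG_s: "s > 0 \<Longrightarrow> GG s s s s s s \<noteq> 0"
  by (simp add: GG_def power2_eq_square)

lemma GG_pq: "p > 0 \<Longrightarrow> q > 0 \<Longrightarrow> GG p p p q q q = 0 \<Longrightarrow> GG p p q q p p \<noteq> 0"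
proof -
  assume h: "p > 0" "q > 0" "GG p p p q q q = 0"
  have "GG p p p q q q = (q^2/2)^2 * (3*p^2 - q^2)" by (simp add: GG_def Let_def power2_eq_square field_simps) 
  hence q3: "q^2 = 3*p^2" using h by simp
  have "GG p p q q p p = (q^2)^2 * (p^2 - q^2/2)" by (simp add: GG_def Let_def power2_eq_square field_simps) 
  thus ?thesis using q3 h by simp
qed

lemma dist_pair_le: "dist (a, b) (c, d) \<le> dist a c + dist b d"
  by (simp add: dist_Pair_Pair sqrt_sum_squares_le_sum_abs[of "dist a c" "dist b d", simplified])

lemma GG_robust:
  assumes "GG t1 t2 t3 t4 t5 t6 \<noteq> 0"
  shows "\<exists>\<eta>>0. \<forall>d1 d2 d3 d4 d5 d6. \<bar>d1-t1\<bar> \<le> \<eta> \<and> \<bar>d2-t2\<bar> \<le> \<eta> \<and> \<bar>d3-t3\<bar> \<le> \<eta> \<and>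
        \<bar>d4-t4\<bar> \<le> \<eta> \<and> \<bar>d5-t5\<bar> \<le> \<eta> \<and> \<bar>d6-t6\<bar> \<le> \<eta> \<longrightarrow> GG d1 d2 d3 d4 d5 d6 \<noteq> 0"
proof -
  define F :: "real \<times> real \<times> real \<times> real \<times> real \<times> real \<Rightarrow> real" where
    "F z = GG (fst z) (fst (snd z)) (fst (snd (snd z))) (fst (snd (snd (snd z))))
              (fst (snd (snd (snd (snd z))))) (snd (snd (snd (snd (snd z)))))" for z
  have "continuous_on UNIV F"
    unfolding F_def GG_def Let_def by (intro continuous_intros) auto
  then obtain d where d: "d > 0" "\<And>z. dist z (t1,t2,t3,t4,t5,t6) < d \<Longrightarrow>
      dist (F z) (F (t1,t2,t3,t4,t5,t6)) < \<bar>GG t1 t2 t3 t4 t5 t6\<bar>"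
    using assms unfolding continuous_on_iff by (metis UNIV_I zero_less_abs_iff)
  show ?thesis
  proof (intro exI[of _ "d/7"] conjI allI impI)
    show "d/7 > 0" using d by simp
    fix d1 d2 d3 d4 d5 d6
    assume h: "\<bar>d1-t1\<bar> \<le> d/7 \<and> \<bar>d2-t2\<bar> \<le> d/7 \<and> \<bar>d3-t3\<bar> \<le> d/7 \<and>
        \<bar>d4-t4\<bar> \<le> d/7 \<and> \<bar>d5-t5\<bar> \<le> d/7 \<and> \<bar>d6-t6\<bar> \<le> d/7"
    have "dist (d1,d2,d3,d4,d5,d6) (t1,t2,t3,t4,t5,t6) \<le>
       dist d1 t1 + (dist d2 t2 + (dist d3 t3 + (dist d4 t4 + (dist d5 t5 + dist d6 t6))))"
      by (meson add_left_mono dist_pair_le order_trans)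
    also have "\<dots> < d" using h d(1) by (simp add: dist_real_def)
    finally have "dist (F (d1,d2,d3,d4,d5,d6)) (F (t1,t2,t3,t4,t5,t6)) < \<bar>GG t1 t2 t3 t4 t5 t6\<bar>"
      using d(2) by blast
    then show "GG d1 d2 d3 d4 d5 d6 \<noteq> 0" by (auto simp: F_def dist_real_def)
  qed
qed

lemma finite_eta:
  assumes "finite T" "\<And>t. t \<in> T \<Longrightarrow> \<exists>\<eta>>0. P \<eta> t"
    "\<And>\<eta> \<eta>' t. 0 < \<eta>' \<Longrightarrow> \<eta>' \<le> \<eta> \<Longrightarrow> P \<eta> t \<Longrightarrow> P \<eta>' t"
  shows "\<exists>\<eta>>0. \<forall>t\<in>T. P (\<eta>::real) t"
  using assms(1,2)
proof (induction T rule: finite_induct)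
  case empty then show ?case by (auto intro: exI[of _ 1])
next
  case (insert x F)
  then obtain e1 where e1: "e1 > 0" "\<forall>t\<in>F. P e1 t" by auto
  obtain e2 where e2: "e2 > 0" "P e2 x" using insert by auto
  have m: "min e1 e2 > 0" using e1 e2 by simp
  have "P (min e1 e2) x" using assms(3)[OF m min.cobounded2 e2(2)] .
  moreover have "\<forall>t\<in>F. P (min e1 e2) t" using assms(3)[OF m min.cobounded1] e1(2) by blast
  ultimately show ?case using m by (intro exI[of _ "min e1 e2"]) auto
qed

definition perm3 :: "real \<Rightarrow> real \<Rightarrow> real \<Rightarrow> real \<Rightarrow> real \<Rightarrow> real \<Rightarrow> bool" where
  "perm3 u v w a b c \<longleftrightarrow> (u=a\<and>v=b\<and>w=c) \<or> (u=a\<and>v=c\<and>w=b) \<or> (u=b\<and>v=a\<and>w=c) \<or>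
     (u=b\<and>v=c\<and>w=a) \<or> (u=c\<and>v=a\<and>w=b) \<or> (u=c\<and>v=b\<and>w=a)"

lemma comb_iso:
  fixes t :: "'p \<Rightarrow> 'p \<Rightarrow> real"
  assumes tsym: "\<And>u v. t u v = t v u" and fin: "finite Y" "card Y = 4" "x \<notin> Y"
    and hperm: "\<And>u v. u\<in>Y \<Longrightarrow> v\<in>Y \<Longrightarrow> u\<noteq>v \<Longrightarrow> perm3 (t x u) (t x v) (t u v) p p q"
    and hG: "\<And>w0 w1 w2 w3. w0 \<in> insert x Y \<Longrightarrow> w1 \<in> insert x Y \<Longrightarrow> w2 \<in> insert x Y \<Longrightarrow>
       w3 \<in> insert x Y \<Longrightarrow> distinct [w0,w1,w2,w3] \<Longrightarrow>
       GG (t w0 w1) (t w0 w2) (t w0 w3) (t w1 w2) (t w1 w3) (t w2 w3) = 0"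
    and pos: "p > 0" "q > 0"
  shows False
proof -
  have hp: "(t x u = p \<and> t x v = p \<and> t u v = q) \<or> (t x u = p \<and> t x v = q \<and> t u v = p) \<or>
      (t x u = q \<and> t x v = p \<and> t u v = p)" if "u\<in>Y" "v\<in>Y" "u\<noteq>v" for u v
    using hperm[OF that] unfolding perm3_def by blast
  obtain y1 y2 y3 y4 where Y: "Y = {y1,y2,y3,y4}" and dy: "distinct [y1,y2,y3,y4]"
    using fin(2) by (auto simp: card_Suc_eq numeral_eq_Suc)
  show False
  proof (cases "p = q")
    case True
    have "t x y1 = p" "t x y2 = p" "t x y3 = p" "t y1 y2 = p" "t y1 y3 = p" "t y2 y3 = p"
      using hp[of y1 y2] hp[of y1 y3] hp[of y2 y3] True dy Y by auto
    moreover have "GG (t x y1) (t x y2) (t x y3) (t y1 y2) (t y1 y3) (t y2 y3) = 0"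
      using hG[of x y1 y2 y3] Y dy fin(3) by auto
    ultimately show False using GG_s[OF pos(1)] by simp
  next
    case False
    show False
    proof (cases "\<forall>y\<in>Y. t x y = p")
      case True
      have "t y1 y2 = q" "t y1 y3 = q" "t y1 y4 = q" "t y2 y3 = q" "t y2 y4 = q" "t y3 y4 = q"
        using hp[of y1 y2] hp[of y1 y3] hp[of y2 y3] hp[of y1 y4] hp[of y2 y4] hp[of y3 y4]
          True False dy Y by auto
      moreover have "GG (t y1 y2) (t y1 y3) (t y1 y4) (t y2 y3) (t y2 y4) (t y3 y4) = 0"
        using hG[of y1 y2 y3 y4] Y dy fin(3) by auto
      ultimately show False using GG_s[OF pos(2)] by simp
    next
      case nz: False
      then obtain z where z: "z \<in> Y" "t x z \<noteq> p" by blast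
      have "card (Y - {z}) = 3" using fin z by simp
      then obtain z1 z2 z3 where Z: "Y - {z} = {z1,z2,z3}" and dz: "distinct [z1,z2,z3]"
        by (auto simp: card_Suc_eq numeral_eq_Suc)
      have zin: "z1 \<in> Y" "z2 \<in> Y" "z3 \<in> Y" "z1 \<noteq> z" "z2 \<noteq> z" "z3 \<noteq> z" using Z by auto
      have tz: "t x z = q" using hp[of z z1] zin z by auto
      have "t x z1 = p" "t x z2 = p" "t x z3 = p"
        using hp[of z1 z] hp[of z2 z] hp[of z3 z] zin z tz False by auto
      moreover have "t z1 z2 = q" "t z1 z3 = q" "t z2 z3 = q" "t z1 z = p" "t z2 z = p"
        using hp[of z1 z2] hp[of z1 z3] hp[of z2 z3] hp[of z1 z] hp[of z2 z] zin dz z tz calculation False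
        by auto
      moreover have "GG (t x z1) (t x z2) (t x z3) (t z1 z2) (t z1 z3) (t z2 z3) = 0"
        using hG[of x z1 z2 z3] zin dz fin(3) by auto
      moreover have "GG (t x z1) (t x z2) (t x z) (t z1 z2) (t z1 z) (t z2 z) = 0"
        using hG[of x z1 z2 z] zin dz z fin(3) by auto
      ultimately show False using GG_pq[OF pos] tz by simp
    qed
  qed
qed

lemma comb:
  fixes t :: "'p \<Rightarrow> 'p \<Rightarrow> real"
  assumes tsym: "\<And>u v. t u v = t v u" and fin: "finite Y" "card Y = 4" "x \<notin> Y"
    and hperm: "\<And>u v. u\<in>Y \<Longrightarrow> v\<in>Y \<Longrightarrow> u\<noteq>v \<Longrightarrow> perm3 (t x u) (t x v) (t u v) a b c"
    and hG: "\<And>w0 w1 w2 w3. w0 \<in> insert x Y \<Longrightarrow> w1 \<in> insert x Y \<Longrightarrow> w2 \<in> insert x Y \<Longrightarrow>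
       w3 \<in> insert x Y \<Longrightarrow> distinct [w0,w1,w2,w3] \<Longrightarrow>
       GG (t w0 w1) (t w0 w2) (t w0 w3) (t w1 w2) (t w1 w3) (t w2 w3) = 0"
    and pos: "a > 0" "b > 0" "c > 0"
  shows False
proof (cases "a = b \<or> a = c \<or> b = c")
  case True
  then show False
  proof (elim disjE)
    assume e: "a = b"
    have hp': "perm3 (t x u) (t x v) (t u v) a a c" if "u\<in>Y" "v\<in>Y" "u\<noteq>v" for u v
      using hperm[OF that] e by simp
    show False using comb_iso[where t=t and Y=Y and x=x and p=a and q=c] tsym fin hp' hG pos by blast
  next
    assume e: "a = c"
    have hp': "perm3 (t x u) (t x v) (t u v) a a b" if "u\<in>Y" "v\<in>Y" "u\<noteq>v" for u v
      using hperm[OF that] e unfolding perm3_def by blast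
    show False using comb_iso[where t=t and Y=Y and x=x and p=a and q=b] tsym fin hp' hG pos by blast
  next
    assume e: "b = c"
    have hp': "perm3 (t x u) (t x v) (t u v) b b a" if "u\<in>Y" "v\<in>Y" "u\<noteq>v" for u v
      using hperm[OF that] e unfolding perm3_def by blast
    show False using comb_iso[where t=t and Y=Y and x=x and p=b and q=a] tsym fin hp' hG pos by blast
  qed
next
  case False
  have ne: "\<exists>v\<in>Y. v \<noteq> u" for u
  proof (rule ccontr)
    assume "\<not> ?thesis"
    then have "Y \<subseteq> {u}" by auto
    then have "card Y \<le> card {u}" by (intro card_mono) auto
    then show False using fin by simp
  qed
  have "inj_on (t x) Y"
  proof (rule inj_onI)
    fix u v assume uv: "u \<in> Y" "v \<in> Y" "t x u = t x v"
    show "u = v"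
    proof (rule ccontr)
      assume "u \<noteq> v"
      from hperm[OF uv(1,2) this] uv(3) False show False unfolding perm3_def by auto
    qed
  qed
  moreover have "t x ` Y \<subseteq> {a,b,c}"
  proof
    fix r assume "r \<in> t x ` Y"
    then obtain u where u: "u \<in> Y" "r = t x u" by auto
    then obtain v where "v \<in> Y" "v \<noteq> u" using ne by blast
    then show "r \<in> {a,b,c}" using hperm[of u v] u unfolding perm3_def by auto
  qed
  ultimately have "card Y \<le> card {a,b,c}" by (intro card_inj_on_le) auto
  also have "\<dots> \<le> 3" by (simp add: card_insert_if)
  finally show False using fin by simp
qed

definition close3 :: "real \<Rightarrow> real \<Rightarrow> real \<Rightarrow> real \<Rightarrow> real \<Rightarrow> real \<Rightarrow> real \<Rightarrow> bool" where
  "close3 a b c \<eta> u v w \<longleftrightarrow> (\<exists>s1 s2 s3. perm3 s1 s2 s3 a b c \<and>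
      \<bar>u-s1\<bar> \<le> \<eta> \<and> \<bar>v-s2\<bar> \<le> \<eta> \<and> \<bar>w-s3\<bar> \<le> \<eta>)"

lemma close3I: "perm3 s1 s2 s3 a b c \<Longrightarrow> \<bar>u-s1\<bar> \<le> \<eta> \<Longrightarrow> \<bar>v-s2\<bar> \<le> \<eta> \<Longrightarrow> \<bar>w-s3\<bar> \<le> \<eta>
   \<Longrightarrow> close3 a b c \<eta> u v w"
  unfolding close3_def by blast

lemma close3_swap: "close3 a b c \<eta> u v w \<Longrightarrow> close3 a b c \<eta> v u w"
  unfolding close3_def perm3_def by blast

lemma close3_near: "close3 a b c \<eta> u v w \<Longrightarrow>
   (\<exists>s\<in>{a,b,c}. \<bar>u-s\<bar> \<le> \<eta>) \<and> (\<exists>s\<in>{a,b,c}. \<bar>v-s\<bar> \<le> \<eta>) \<and> (\<exists>s\<in>{a,b,c}. \<bar>w-s\<bar> \<le> \<eta>)"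
  unfolding close3_def perm3_def by auto

definition rnd :: "real \<Rightarrow> real \<Rightarrow> real \<Rightarrow> real \<Rightarrow> real \<Rightarrow> real" where
  "rnd a b c \<eta> d = (if \<bar>d-a\<bar> \<le> \<eta> then a else if \<bar>d-b\<bar> \<le> \<eta> then b else c)"

lemma rnd_in: "rnd a b c \<eta> d \<in> {a,b,c}"
  unfolding rnd_def by auto

lemma rnd_eq:
  assumes sep: "\<forall>u\<in>{a,b,c}. \<forall>v\<in>{a,b,c}. u \<noteq> v \<longrightarrow> 2*\<eta> < \<bar>u-v\<bar>"
    and s: "s \<in> {a,b,c}" "\<bar>d-s\<bar> \<le> \<eta>"
  shows "rnd a b c \<eta> d = s"
proof -
  have k: "u = s" if "u \<in> {a,b,c}" "\<bar>d-u\<bar> \<le> \<eta>" for u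
  proof (rule ccontr)
    assume us: "u \<noteq> s"
    have "\<forall>v\<in>{a,b,c}. u \<noteq> v \<longrightarrow> 2*\<eta> < \<bar>u-v\<bar>" using sep that(1) by (rule bspec)
    then have "u \<noteq> s \<longrightarrow> 2*\<eta> < \<bar>u-s\<bar>" using s(1) by (rule bspec)
    then have "2*\<eta> < \<bar>u-s\<bar>" using us by (rule mp)
    then show False using that(2) s(2) by linarith
  qed
  show ?thesis
  proof (cases "\<bar>d-a\<bar> \<le> \<eta>")
    case True
    then show ?thesis using k[of a] by (simp add: rnd_def)
  next
    case F1: False
    show ?thesis
    proof (cases "\<bar>d-b\<bar> \<le> \<eta>")
      case True
      then show ?thesis using k[of b] F1 by (simp add: rnd_def)
    next
      case False
      then have "s = c" using F1 s by auto
      then show ?thesis using F1 False by (simp add: rnd_def)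
    qed
  qed
qed

lemma close3_perm:
  assumes sep: "\<forall>u\<in>{a,b,c}. \<forall>v\<in>{a,b,c}. u \<noteq> v \<longrightarrow> 2*\<eta> < \<bar>u-v\<bar>"
    and h: "close3 a b c \<eta> u v w"
  shows "perm3 (rnd a b c \<eta> u) (rnd a b c \<eta> v) (rnd a b c \<eta> w) a b c"
proof -
  obtain s1 s2 s3 where s: "perm3 s1 s2 s3 a b c" "\<bar>u-s1\<bar> \<le> \<eta>" "\<bar>v-s2\<bar> \<le> \<eta>" "\<bar>w-s3\<bar> \<le> \<eta>"
    using h unfolding close3_def by blast
  have "s1 \<in> {a,b,c}" "s2 \<in> {a,b,c}" "s3 \<in> {a,b,c}" using s(1) unfolding perm3_def by auto
  then have "rnd a b c \<eta> u = s1" "rnd a b c \<eta> v = s2" "rnd a b c \<eta> w = s3"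
    using rnd_eq[OF sep] s by auto
  then show ?thesis using s(1) by simp
qed

lemma dd: "\<bar>dist q r - dist B C\<bar> \<le> dist q B + dist r C"
  by (smt (verit) dist_commute dist_triangle)

lemma perm_of_set:
  assumes S: "{u,v,w} = {p,q,r}" and d: "distinct [u,v,w]"
  shows "(p=u \<and> q=v \<and> r=w) \<or> (p=u \<and> q=w \<and> r=v) \<or> (p=v \<and> q=u \<and> r=w) \<or>
        (p=v \<and> q=w \<and> r=u) \<or> (p=w \<and> q=u \<and> r=v) \<or> (p=w \<and> q=v \<and> r=u)"
proof -
  have m: "p \<in> {u,v,w}" "q \<in> {u,v,w}" "r \<in> {u,v,w}" "u \<in> {p,q,r}" "v \<in> {p,q,r}" "w \<in> {p,q,r}"
    using S by blast+
  from m(1-3) d m(4-6) show ?thesis by auto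
qed
lemma edge_close:
  assumes e: "eps_congruent a b c \<epsilon> p q r" and S: "{u,v,w} = {p,q,r}" and d: "distinct [u,v,w]"
  shows "close3 a b c (2*(\<epsilon> * min a (min b c))) (dist u v) (dist u w) (dist v w)"
proof -
  define \<delta> where "\<delta> = \<epsilon> * min a (min b c)"
  obtain A B C :: "real^2" where ABC: "dist B C = a" "dist C A = b" "dist A B = c"
    "dist p A \<le> \<delta>" "dist q B \<le> \<delta>" "dist r C \<le> \<delta>"
    using e unfolding eps_congruent_def \<delta>_def by blast
  have h1: "\<bar>dist q r - a\<bar> \<le> 2*\<delta>" using dd[of q r B C] ABC by linarith
  have h2: "\<bar>dist r p - b\<bar> \<le> 2*\<delta>" using dd[of r p C A] ABC by linarith
  have h3: "\<bar>dist p q - c\<bar> \<le> 2*\<delta>" using dd[of p q A B] ABC by linarith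
  have h1': "\<bar>dist r q - a\<bar> \<le> 2*\<delta>" using h1 by (simp add: dist_commute)
  have h2': "\<bar>dist p r - b\<bar> \<le> 2*\<delta>" using h2 by (simp add: dist_commute)
  have h3': "\<bar>dist q p - c\<bar> \<le> 2*\<delta>" using h3 by (simp add: dist_commute)
  have "(p=u \<and> q=v \<and> r=w) \<or> (p=u \<and> q=w \<and> r=v) \<or> (p=v \<and> q=u \<and> r=w) \<or>
        (p=v \<and> q=w \<and> r=u) \<or> (p=w \<and> q=u \<and> r=v) \<or> (p=w \<and> q=v \<and> r=u)"
    by (rule perm_of_set[OF S d])
  then have "close3 a b c (2*\<delta>) (dist u v) (dist u w) (dist v w)"
  proof (elim disjE conjE)
    assume "p=u" "q=v" "r=w" then show ?thesis using h1 h2 h3 h1' h2' h3'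
      by (intro close3I[of c b a]) (simp_all add: perm3_def)
  next
    assume "p=u" "q=w" "r=v" then show ?thesis using h1 h2 h3 h1' h2' h3'
      by (intro close3I[of b c a]) (simp_all add: perm3_def)
  next
    assume "p=v" "q=u" "r=w" then show ?thesis using h1 h2 h3 h1' h2' h3'
      by (intro close3I[of c a b]) (simp_all add: perm3_def)
  next
    assume "p=v" "q=w" "r=u" then show ?thesis using h1 h2 h3 h1' h2' h3'
      by (intro close3I[of b a c]) (simp_all add: perm3_def)
  next
    assume "p=w" "q=u" "r=v" then show ?thesis using h1 h2 h3 h1' h2' h3'
      by (intro close3I[of a c b]) (simp_all add: perm3_def)
  next
    assume "p=w" "q=v" "r=u" then show ?thesis using h1 h2 h3 h1' h2' h3'
      by (intro close3I[of a b c]) (simp_all add: perm3_def)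
  qed
  then show ?thesis unfolding \<delta>_def .
qed

lemma M:
  assumes pos: "a>0" "b>0" "c>0"
  shows "\<exists>\<eta>>0. \<forall>x y1 y2 y3 y4 :: real^2. distinct [x,y1,y2,y3,y4] \<longrightarrow>
     close3 a b c \<eta> (dist x y1) (dist x y2) (dist y1 y2) \<longrightarrow>
     close3 a b c \<eta> (dist x y1) (dist x y3) (dist y1 y3) \<longrightarrow>
     close3 a b c \<eta> (dist x y1) (dist x y4) (dist y1 y4) \<longrightarrow>
     close3 a b c \<eta> (dist x y2) (dist x y3) (dist y2 y3) \<longrightarrow>
     close3 a b c \<eta> (dist x y2) (dist x y4) (dist y2 y4) \<longrightarrow>
     close3 a b c \<eta> (dist x y3) (dist x y4) (dist y3 y4) \<longrightarrow> False"
proof -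
  define S where "S = {a,b,c}"
  define P1 where "P1 \<eta> t \<longleftrightarrow> (case t of (t1,t2,t3,t4,t5,t6) \<Rightarrow> GG t1 t2 t3 t4 t5 t6 \<noteq> 0 \<longrightarrow>
     (\<forall>d1 d2 d3 d4 d5 d6. \<bar>d1-t1\<bar> \<le> \<eta> \<and> \<bar>d2-t2\<bar> \<le> \<eta> \<and> \<bar>d3-t3\<bar> \<le> \<eta> \<and>
        \<bar>d4-t4\<bar> \<le> \<eta> \<and> \<bar>d5-t5\<bar> \<le> \<eta> \<and> \<bar>d6-t6\<bar> \<le> \<eta> \<longrightarrow> GG d1 d2 d3 d4 d5 d6 \<noteq> 0))"
    for \<eta> :: real and t :: "real \<times> real \<times> real \<times> real \<times> real \<times> real"
  have "\<exists>\<eta>>0. \<forall>t\<in>S\<times>S\<times>S\<times>S\<times>S\<times>S. P1 \<eta> t"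
  proof (rule finite_eta)
    show "finite (S\<times>S\<times>S\<times>S\<times>S\<times>S)" by (simp add: S_def)
  next
    fix t :: "real \<times> real \<times> real \<times> real \<times> real \<times> real"
    obtain t1 t2 t3 t4 t5 t6 where t: "t = (t1,t2,t3,t4,t5,t6)" by (cases t) auto
    show "\<exists>\<eta>>0. P1 \<eta> t"
    proof (cases "GG t1 t2 t3 t4 t5 t6 = 0")
      case True
      then show ?thesis by (intro exI[of _ 1]) (simp add: P1_def t)
    next
      case False
      from GG_robust[OF this] obtain \<eta> where "\<eta> > 0" "\<forall>d1 d2 d3 d4 d5 d6. \<bar>d1-t1\<bar> \<le> \<eta> \<and> \<bar>d2-t2\<bar> \<le> \<eta> \<and> \<bar>d3-t3\<bar> \<le> \<eta> \<and>
        \<bar>d4-t4\<bar> \<le> \<eta> \<and> \<bar>d5-t5\<bar> \<le> \<eta> \<and> \<bar>d6-t6\<bar> \<le> \<eta> \<longrightarrow> GG d1 d2 d3 d4 d5 d6 \<noteq> 0"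
        by blast
      then show ?thesis by (intro exI[of _ \<eta>]) (simp add: P1_def t)
    qed
  next
    fix \<eta> \<eta>' :: real and t :: "real \<times> real \<times> real \<times> real \<times> real \<times> real"
    assume h: "0 < \<eta>'" "\<eta>' \<le> \<eta>" "P1 \<eta> t"
    obtain t1 t2 t3 t4 t5 t6 where t: "t = (t1,t2,t3,t4,t5,t6)" by (cases t) auto
    show "P1 \<eta>' t" unfolding P1_def t prod.case
    proof (rule impI, intro allI)
      fix d1 d2 d3 d4 d5 d6
      assume g: "GG t1 t2 t3 t4 t5 t6 \<noteq> 0"
      from h(3) g have k: "\<forall>d1 d2 d3 d4 d5 d6. \<bar>d1-t1\<bar> \<le> \<eta> \<and> \<bar>d2-t2\<bar> \<le> \<eta> \<and> \<bar>d3-t3\<bar> \<le> \<eta> \<and>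
        \<bar>d4-t4\<bar> \<le> \<eta> \<and> \<bar>d5-t5\<bar> \<le> \<eta> \<and> \<bar>d6-t6\<bar> \<le> \<eta> \<longrightarrow> GG d1 d2 d3 d4 d5 d6 \<noteq> 0"
        unfolding P1_def t by simp
      show "\<bar>d1-t1\<bar> \<le> \<eta>' \<and> \<bar>d2-t2\<bar> \<le> \<eta>' \<and> \<bar>d3-t3\<bar> \<le> \<eta>' \<and>
        \<bar>d4-t4\<bar> \<le> \<eta>' \<and> \<bar>d5-t5\<bar> \<le> \<eta>' \<and> \<bar>d6-t6\<bar> \<le> \<eta>' \<longrightarrow> GG d1 d2 d3 d4 d5 d6 \<noteq> 0"
        using k h(2) by (meson order_trans)
    qed
  qed
  then obtain \<eta>1 where e1: "\<eta>1 > 0" "\<forall>t\<in>S\<times>S\<times>S\<times>S\<times>S\<times>S. P1 \<eta>1 t" by blast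
  define P2 where "P2 \<eta> t \<longleftrightarrow> (case t of (u,v) \<Rightarrow> u \<noteq> v \<longrightarrow> 2*\<eta> < \<bar>u-v\<bar>)"
    for \<eta> :: real and t :: "real \<times> real"
  have "\<exists>\<eta>>0. \<forall>t\<in>S\<times>S. P2 \<eta> t"
  proof (rule finite_eta)
    show "finite (S\<times>S)" by (simp add: S_def)
  next
    fix t :: "real \<times> real"
    obtain u v where t: "t = (u,v)" by (cases t) auto
    show "\<exists>\<eta>>0. P2 \<eta> t"
    proof (cases "u = v")
      case True
      then show ?thesis by (intro exI[of _ 1]) (simp add: P2_def t)
    next
      case False
      then show ?thesis by (intro exI[of _ "\<bar>u-v\<bar>/3"]) (simp add: P2_def t)
    qed
  next
    fix \<eta> \<eta>' :: real and t :: "real \<times> real"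
    assume h: "0 < \<eta>'" "\<eta>' \<le> \<eta>" "P2 \<eta> t"
    then show "P2 \<eta>' t" unfolding P2_def by (cases t) auto
  qed
  then obtain \<eta>2 where e2: "\<eta>2 > 0" "\<forall>t\<in>S\<times>S. P2 \<eta>2 t" by blast
  define \<eta> where "\<eta> = min \<eta>1 \<eta>2"
  have sep: "\<forall>u\<in>{a,b,c}. \<forall>v\<in>{a,b,c}. u \<noteq> v \<longrightarrow> 2*\<eta> < \<bar>u-v\<bar>"
  proof (intro ballI impI)
    fix u v assume uv: "u \<in> {a,b,c}" "v \<in> {a,b,c}" "u \<noteq> v"
    then have "P2 \<eta>2 (u,v)" using e2(2) unfolding S_def by blast
    then have "2*\<eta>2 < \<bar>u-v\<bar>" using uv(3) unfolding P2_def by simp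
    then show "2*\<eta> < \<bar>u-v\<bar>" unfolding \<eta>_def by linarith
  qed
  show ?thesis
  proof (intro exI[of _ \<eta>] conjI allI impI)
    show "\<eta> > 0" using e1 e2 by (simp add: \<eta>_def)
    fix x y1 y2 y3 y4 :: "real^2"
    assume dst: "distinct [x,y1,y2,y3,y4]"
    define C where "C u v \<longleftrightarrow> close3 a b c \<eta> (dist x u) (dist x v) (dist u v)" for u v
    assume "close3 a b c \<eta> (dist x y1) (dist x y2) (dist y1 y2)"
      "close3 a b c \<eta> (dist x y1) (dist x y3) (dist y1 y3)"
      "close3 a b c \<eta> (dist x y1) (dist x y4) (dist y1 y4)"
      "close3 a b c \<eta> (dist x y2) (dist x y3) (dist y2 y3)"
      "close3 a b c \<eta> (dist x y2) (dist x y4) (dist y2 y4)"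
      "close3 a b c \<eta> (dist x y3) (dist x y4) (dist y3 y4)"
    then have Cs: "C y1 y2" "C y1 y3" "C y1 y4" "C y2 y3" "C y2 y4" "C y3 y4" unfolding C_def by auto
    have Csym: "C v u" if "C u v" for u v
      using close3_swap[OF that[unfolded C_def]] by (simp add: C_def dist_commute)
    define Y where "Y = {y1,y2,y3,y4}"
    have CY: "C u v" if "u \<in> Y" "v \<in> Y" "u \<noteq> v" for u v
      using that Cs Csym[OF Cs(1)] Csym[OF Cs(2)] Csym[OF Cs(3)] Csym[OF Cs(4)] Csym[OF Cs(5)]
        Csym[OF Cs(6)] unfolding Y_def by auto
    have other: "\<exists>w\<in>Y. w \<noteq> v" for v
      by (rule bexI[of _ "if v = y1 then y2 else y1"]) (use dst in \<open>auto simp: Y_def\<close>)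
    have near: "\<exists>s\<in>{a,b,c}. \<bar>dist u v - s\<bar> \<le> \<eta>"
      if "u \<in> insert x Y" "v \<in> insert x Y" "u \<noteq> v" for u v
    proof (cases "u = x")
      case True
      then have v: "v \<in> Y" using that by auto
      obtain w where "w \<in> Y" "w \<noteq> v" using other by blast
      then have "C v w" using CY v by auto
      then show ?thesis using close3_near True unfolding C_def by (auto simp: dist_commute)
    next
      case ux: False
      show ?thesis
      proof (cases "v = x")
        case True
        then have u: "u \<in> Y" using that ux by auto
        obtain w where "w \<in> Y" "w \<noteq> u" using other by blast
        then have "C u w" using CY u by auto
        then show ?thesis using close3_near True unfolding C_def by (auto simp: dist_commute)
      next
        case False
        then have "C u v" using CY that ux by auto
        then show ?thesis using close3_near unfolding C_def by blast
      qed
    qed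
    define t :: "real^2 \<Rightarrow> real^2 \<Rightarrow> real" where "t u v = rnd a b c \<eta> (dist u v)" for u v
    have tnear: "\<bar>dist u v - t u v\<bar> \<le> \<eta>"
      if tu: "u \<in> insert x Y" "v \<in> insert x Y" "u \<noteq> v" for u v
    proof -
      obtain s where s: "s \<in> {a,b,c}" "\<bar>dist u v - s\<bar> \<le> \<eta>" using near[OF tu] by blast
      have "t u v = s" unfolding t_def by (rule rnd_eq[OF sep s])
      then show ?thesis using s by simp
    qed
    show False
    proof (rule comb[where t=t and Y=Y and x=x and a=a and b=b and c=c])
      show "t u v = t v u" for u v by (simp add: t_def dist_commute)
      show "finite Y" by (simp add: Y_def)
      show "card Y = 4" using dst by (simp add: Y_def)
      show "x \<notin> Y" using dst by (simp add: Y_def)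
      show "perm3 (t x u) (t x v) (t u v) a b c" if "u \<in> Y" "v \<in> Y" "u \<noteq> v" for u v
        using close3_perm[OF sep CY[OF that, unfolded C_def]] by (simp add: t_def)
      show "a > 0" "b > 0" "c > 0" by (fact pos)+
    next
      fix w0 w1 w2 w3
      assume w: "w0 \<in> insert x Y" "w1 \<in> insert x Y" "w2 \<in> insert x Y" "w3 \<in> insert x Y"
        and dw: "distinct [w0,w1,w2,w3]"
      show "GG (t w0 w1) (t w0 w2) (t w0 w3) (t w1 w2) (t w1 w3) (t w2 w3) = 0"
      proof (rule ccontr)
        assume g: "GG (t w0 w1) (t w0 w2) (t w0 w3) (t w1 w2) (t w1 w3) (t w2 w3) \<noteq> 0"
        have "(t w0 w1, t w0 w2, t w0 w3, t w1 w2, t w1 w3, t w2 w3) \<in> S\<times>S\<times>S\<times>S\<times>S\<times>S"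
          unfolding mem_Times_iff fst_conv snd_conv t_def S_def using rnd_in by blast
        then have "P1 \<eta>1 (t w0 w1, t w0 w2, t w0 w3, t w1 w2, t w1 w3, t w2 w3)" using e1(2) by blast
        then have k: "\<forall>d1 d2 d3 d4 d5 d6. \<bar>d1 - t w0 w1\<bar> \<le> \<eta>1 \<and> \<bar>d2 - t w0 w2\<bar> \<le> \<eta>1 \<and>
           \<bar>d3 - t w0 w3\<bar> \<le> \<eta>1 \<and> \<bar>d4 - t w1 w2\<bar> \<le> \<eta>1 \<and> \<bar>d5 - t w1 w3\<bar> \<le> \<eta>1 \<and>
           \<bar>d6 - t w2 w3\<bar> \<le> \<eta>1 \<longrightarrow> GG d1 d2 d3 d4 d5 d6 \<noteq> 0"
          using g unfolding P1_def by simp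
        have le: "\<eta> \<le> \<eta>1" by (simp add: \<eta>_def)
        have dd6: "w0 \<noteq> w1" "w0 \<noteq> w2" "w0 \<noteq> w3" "w1 \<noteq> w2" "w1 \<noteq> w3" "w2 \<noteq> w3"
          using dw by auto
        have "\<bar>dist w0 w1 - t w0 w1\<bar> \<le> \<eta>1" "\<bar>dist w0 w2 - t w0 w2\<bar> \<le> \<eta>1"
          "\<bar>dist w0 w3 - t w0 w3\<bar> \<le> \<eta>1" "\<bar>dist w1 w2 - t w1 w2\<bar> \<le> \<eta>1"
          "\<bar>dist w1 w3 - t w1 w3\<bar> \<le> \<eta>1" "\<bar>dist w2 w3 - t w2 w3\<bar> \<le> \<eta>1"
          using tnear[OF w(1) w(2) dd6(1)] tnear[OF w(1) w(3) dd6(2)] tnear[OF w(1) w(4) dd6(3)]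
            tnear[OF w(2) w(3) dd6(4)] tnear[OF w(2) w(4) dd6(5)] tnear[OF w(3) w(4) dd6(6)] le
          by linarith+
        then have "GG (dist w0 w1) (dist w0 w2) (dist w0 w3) (dist w1 w2) (dist w1 w3) (dist w2 w3) \<noteq> 0"
          using k by meson
        then show False using GG_planar[of w0 w1 w2 w3] by simp
      qed
    qed
  qed
qed

theorem lemma2p7:
  fixes a b c :: real
  assumes "is_triangle a b c"
  shows "forbidden_for J4 a b c"
proof -
  have pos: "a > 0" "b > 0" "c > 0" using assms unfolding is_triangle_def by auto
  obtain \<eta> where e: "\<eta> > 0" and H: "\<forall>x y1 y2 y3 y4 :: real^2. distinct [x,y1,y2,y3,y4] \<longrightarrow>
     close3 a b c \<eta> (dist x y1) (dist x y2) (dist y1 y2) \<longrightarrow>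
     close3 a b c \<eta> (dist x y1) (dist x y3) (dist y1 y3) \<longrightarrow>
     close3 a b c \<eta> (dist x y1) (dist x y4) (dist y1 y4) \<longrightarrow>
     close3 a b c \<eta> (dist x y2) (dist x y3) (dist y2 y3) \<longrightarrow>
     close3 a b c \<eta> (dist x y2) (dist x y4) (dist y2 y4) \<longrightarrow>
     close3 a b c \<eta> (dist x y3) (dist x y4) (dist y3 y4) \<longrightarrow> False"
    using M[OF pos] by blast
  define m where "m = min a (min b c)"
  have m: "m > 0" using pos by (simp add: m_def)
  define \<epsilon> where "\<epsilon> = \<eta> / (2*m)"
  have e2: "2*(\<epsilon>*m) = \<eta>" using m by (simp add: \<epsilon>_def)
  show ?thesis unfolding forbidden_for_def
  proof (intro exI[of _ \<epsilon>] conjI allI impI)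
    show "\<epsilon> > 0" using e m by (simp add: \<epsilon>_def)
    fix P :: "(real^2) set"
    assume "finite P \<and> card P = card (fst J4)"
    show "free_of J4 (congr_graph a b c P \<epsilon>)"
      unfolding free_of_def contains_copy_def
    proof
      assume "\<exists>f. inj_on f (fst J4) \<and> f ` fst J4 \<subseteq> fst (congr_graph a b c P \<epsilon>) \<and>
          (\<forall>e\<in>snd J4. f ` e \<in> snd (congr_graph a b c P \<epsilon>))"
      then obtain f where inj: "inj_on f {1..5}"
        and ed: "\<forall>e\<in>snd J4. f ` e \<in> snd (congr_graph a b c P \<epsilon>)"
        by (auto simp: J4_def)
      have ne: "f i \<noteq> f j" if "i \<in> {1..5}" "j \<in> {1..5}" "i \<noteq> j" for i j
        using inj_on_eq_iff[OF inj that(1,2)] that(3) by simp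
      have dst: "distinct [f 1, f 2, f 3, f 4, f 5]" using ne by simp
      have E: "close3 a b c \<eta> (dist (f 1) (f i)) (dist (f 1) (f j)) (dist (f i) (f j))"
        if "{1,i,j} \<in> snd J4" "distinct [f 1, f i, f j]" for i j
      proof -
        have "f ` {1,i,j} \<in> snd (congr_graph a b c P \<epsilon>)" using ed that(1) by blast
        then obtain p q r where pqr: "{f 1, f i, f j} = {p,q,r}" "eps_congruent a b c \<epsilon> p q r"
          by (auto simp: congr_graph_def)
        from edge_close[OF pqr(2) pqr(1) that(2)] show ?thesis using e2 by (simp add: m_def)
      qed
      have J: "{1,2,3} \<in> snd J4" "{1,2,4} \<in> snd J4" "{1,2,5} \<in> snd J4" "{1,3,4} \<in> snd J4"
        "{1,3,5} \<in> snd J4" "{1,4,5} \<in> snd J4" by (simp_all add: J4_def)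
      have "close3 a b c \<eta> (dist (f 1) (f 2)) (dist (f 1) (f 3)) (dist (f 2) (f 3))"
           "close3 a b c \<eta> (dist (f 1) (f 2)) (dist (f 1) (f 4)) (dist (f 2) (f 4))"
           "close3 a b c \<eta> (dist (f 1) (f 2)) (dist (f 1) (f 5)) (dist (f 2) (f 5))"
           "close3 a b c \<eta> (dist (f 1) (f 3)) (dist (f 1) (f 4)) (dist (f 3) (f 4))"
           "close3 a b c \<eta> (dist (f 1) (f 3)) (dist (f 1) (f 5)) (dist (f 3) (f 5))"
           "close3 a b c \<eta> (dist (f 1) (f 4)) (dist (f 1) (f 5)) (dist (f 4) (f 5))"
        using E[OF J(1)] E[OF J(2)] E[OF J(3)] E[OF J(4)] E[OF J(5)] E[OF J(6)] dst by auto
      then show False using H dst by blast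
    qed
  qed
qed

end
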